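(* Let $d,n,m\geq1$ be integers, and let $\mathsf{M}_1$ be an $n$-outcome POVM and $\mathsf{M}_2$ an $m$-outcome POVM on $\mathbb{C}^d$. Define $$\bar P(\mathsf{M}_1,\mathsf{M}_2)=\frac{1}{2nm}\sum_{x=1}^n\sum_{y=1}^m\big\|\mathsf{M}_1(x)+\mathsf{M}_2(y)\big\|.$$ If $\bar P(\mathsf{M}_1,\mathsf{M}_2)>\frac12\left(1+\frac{d}{nm}\right)$, then $\mathsf{M}_1$ and $\mathsf{M}_2$ are incompatible.
   Context: $\|\cdot\|$ is the operator norm. Two POVMs $\mathsf{M}_1$ (outcomes $x$) and $\mathsf{M}_2$ (outcomes $y$) are compatible if there is a POVM $\mathsf{G}$ on the product outcome set with $\sum_y\mathsf{G}(x,y)=\mathsf{M}_1(x)$ and $\sum_x\mathsf{G}(x,y)=\mathsf{M}_2(y)$; otherwise incompatible. $\bar P(\mathsf{M}_1,\mathsf{M}_2)$ is the maximum over encodings $\{\mathcal{E}(x,y)\}$ of states of the average success probability $\frac{1}{2nm}\sum_{x,y}\mathrm{tr}[\mathcal{E}(x,y)(\mathsf{M}_1(x)+\mathsf{M}_2(y))]$. *)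

theory Defs
  imports "HOL-Analysis.Analysis"
begin

text \<open>Operators on C^d are matrices complex^'d^'d, with d = CARD('d).
  Vectors complex^'d carry the Euclidean (l2) norm.\<close>

definition cinner_vec :: "complex^'d \<Rightarrow> complex^'d \<Rightarrow> complex" where
  "cinner_vec v w = (\<Sum>i\<in>UNIV. cnj (v $ i) * w $ i)"

definition hermitian_mat :: "complex^'d^'d \<Rightarrow> bool" where
  "hermitian_mat A \<longleftrightarrow> (\<forall>i j. A $ i $ j = cnj (A $ j $ i))"

definition psd_mat :: "complex^'d^'d \<Rightarrow> bool" where
  "psd_mat A \<longleftrightarrow> hermitian_mat A \<and> (\<forall>v. 0 \<le> Re (cinner_vec v (A *v v)))"

definition op_norm :: "complex^'d^'d \<Rightarrow> real" where
  "op_norm A = onorm (\<lambda>v. A *v v)"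

text \<open>An n-outcome POVM, outcomes indexed by 0..<n.\<close>
definition povm :: "nat \<Rightarrow> (nat \<Rightarrow> complex^'d^'d) \<Rightarrow> bool" where
  "povm n M \<longleftrightarrow> (\<forall>x<n. psd_mat (M x)) \<and> (\<Sum>x<n. M x) = mat 1"

definition compatible :: "nat \<Rightarrow> nat \<Rightarrow> (nat \<Rightarrow> complex^'d^'d) \<Rightarrow> (nat \<Rightarrow> complex^'d^'d) \<Rightarrow> bool" where
  "compatible n m M1 M2 \<longleftrightarrow>
     (\<exists>G :: nat \<Rightarrow> nat \<Rightarrow> complex^'d^'d.
        (\<forall>x<n. \<forall>y<m. psd_mat (G x y)) \<and> (\<Sum>x<n. \<Sum>y<m. G x y) = mat 1 \<and>
        (\<forall>x<n. (\<Sum>y<m. G x y) = M1 x) \<and> (\<forall>y<m. (\<Sum>x<n. G x y) = M2 y))"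

definition Pbar :: "nat \<Rightarrow> nat \<Rightarrow> (nat \<Rightarrow> complex^'d^'d) \<Rightarrow> (nat \<Rightarrow> complex^'d^'d) \<Rightarrow> real" where
  "Pbar n m M1 M2 = (1 / (2 * real n * real m)) * (\<Sum>x<n. \<Sum>y<m. op_norm (M1 x + M2 y))"

end

theory Submission
  imports Defs
begin

lemma norm_sq_cinner: "(norm (v::complex^'d))^2 = Re (cinner_vec v v)"
proof -
  have "(norm v)^2 = (\<Sum>i\<in>UNIV. (cmod (v$i))^2)"
    unfolding norm_vec_def L2_set_def by (simp add: sum_nonneg)
  also have "\<dots> = Re (cinner_vec v v)"
    unfolding cinner_vec_def Re_sum
    by (intro sum.cong refl) (simp add: cmod_power2, simp add: power2_eq_square)
  finally show ?thesis .
qed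

lemma cinner_add_left: "cinner_vec (u + v) w = cinner_vec u w + cinner_vec v w"
  unfolding cinner_vec_def by (simp add: distrib_right sum.distrib)
lemma cinner_add_right: "cinner_vec w (u + v) = cinner_vec w u + cinner_vec w v"
  unfolding cinner_vec_def by (simp add: distrib_left sum.distrib)
lemma cinner_scale_left: "cinner_vec (c *s u) w = cnj c * cinner_vec u w"
  unfolding cinner_vec_def by (simp add: sum_distrib_left mult.assoc)
lemma cinner_scale_right: "cinner_vec w (c *s u) = c * cinner_vec w u"
  unfolding cinner_vec_def by (simp add: sum_distrib_left algebra_simps)
lemma mv_scale: "(A::complex^'d^'d) *v (c *s u) = c *s (A *v u)"
  by (simp add: vec_eq_iff matrix_vector_mult_def sum_distrib_left algebra_simps)
lemma mv_add: "(A::complex^'d^'d) *v (u + v) = A *v u + A *v v"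
  by (simp add: vec_eq_iff matrix_vector_mult_def sum.distrib algebra_simps)

lemma herm_swap:
  assumes "hermitian_mat (A::complex^'d^'d)"
  shows "cinner_vec v (A *v u) = cnj (cinner_vec u (A *v v))"
proof -
  have H: "cnj (A$j$i) = A$i$j" for i j using assms unfolding hermitian_mat_def by (metis complex_cnj_cnj)
  have "cinner_vec v (A *v u) = (\<Sum>i\<in>UNIV. \<Sum>j\<in>UNIV. cnj (v$i) * A$i$j * u$j)"
    unfolding cinner_vec_def matrix_vector_mult_def by (simp add: sum_distrib_left mult.assoc)
  also have "\<dots> = (\<Sum>j\<in>UNIV. \<Sum>i\<in>UNIV. cnj (v$i) * A$i$j * u$j)" by (rule sum.swap)
  also have "\<dots> = (\<Sum>j\<in>UNIV. \<Sum>i\<in>UNIV. u$j * cnj (A$j$i) * cnj (v$i))"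
    by (rule sum.cong[OF refl], rule sum.cong[OF refl]) (simp add: H mult_ac)
  also have "\<dots> = cnj (cinner_vec u (A *v v))"
    unfolding cinner_vec_def matrix_vector_mult_def cnj_sum complex_cnj_mult complex_cnj_cnj
    by (simp add: sum_distrib_left mult.assoc)
  finally show ?thesis .
qed

lemma psd_real:
  assumes "hermitian_mat (A::complex^'d^'d)"
  shows "Im (cinner_vec v (A *v v)) = 0"
  using herm_swap[OF assms, of v v] by (metis cnj.sel(2) neg_equal_zero)

lemma quad_disc:
  fixes a b c :: real
  assumes "\<And>t. 0 \<le> a - 2*t*b + t^2*b*c" and "b \<ge> 0" and "c \<ge> 0"
  shows "b \<le> a * c"
proof (cases "c = 0")
  case True
  show ?thesis
  proof (cases "b = 0")
    case False
    have "0 \<le> a - 2*((a+1)/(2*b))*b" using assms(1)[of "(a+1)/(2*b)"] True by simp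
    with False show ?thesis by (simp add: field_simps)
  qed (use assms True in auto)
next
  case False
  have "0 \<le> a - 2*(1/c)*b + (1/c)^2*b*c" using assms(1)[of "1/c"] .
  hence "0 \<le> a - b/c" using False by (simp add: power2_eq_square field_simps)
  hence "b/c \<le> a" by simp
  thus ?thesis using False assms(3) by (simp add: field_simps)
qed

lemma psd_cs:
  assumes "psd_mat (A::complex^'d^'d)"
  shows "(cmod (cinner_vec u (A *v v)))^2 \<le> Re (cinner_vec u (A *v u)) * Re (cinner_vec v (A *v v))"
proof -
  let ?b = "cinner_vec u (A *v v)"
  let ?a = "Re (cinner_vec u (A *v u))"
  let ?c = "Re (cinner_vec v (A *v v))"
  have H: "hermitian_mat A" using assms unfolding psd_mat_def by simp
  have sw: "cinner_vec v (A *v u) = cnj ?b" using herm_swap[OF H] .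
  have cm: "(cmod ?b)^2 = (Re ?b)^2 + (Im ?b)^2" by (simp add: cmod_power2)
  have c0: "?c \<ge> 0" using assms unfolding psd_mat_def by simp
  have "0 \<le> ?a - 2*t*(cmod ?b)^2 + t^2*(cmod ?b)^2*?c" for t :: real
  proof -
    define l where "l = - (complex_of_real t) * cnj ?b"
    have "0 \<le> Re (cinner_vec (u + l *s v) (A *v (u + l *s v)))"
      using assms unfolding psd_mat_def by blast
    also have "cinner_vec (u + l *s v) (A *v (u + l *s v)) =
       cinner_vec u (A *v u) + l * ?b + cnj l * cnj ?b + (cnj l * l) * cinner_vec v (A *v v)"
      unfolding mv_add mv_scale cinner_add_left cinner_add_right cinner_scale_left cinner_scale_right sw
      by (simp add: distrib_left mult.assoc)
    also have "Re \<dots> = ?a - 2*t*(cmod ?b)^2 + t^2*(cmod ?b)^2*?c"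
    proof -
      have n2: "?b * cnj ?b = of_real ((cmod ?b)^2)" by (metis complex_norm_square of_real_power)
      have e1: "l * ?b = of_real (- t * (cmod ?b)^2)"
        unfolding l_def using n2 by (simp add: mult.commute mult.left_commute)
      have e2: "cnj l * cnj ?b = of_real (- t * (cmod ?b)^2)"
        unfolding l_def using n2 by (simp add: mult.commute mult.left_commute)
      have e3: "cnj l * l = of_real (t^2 * (cmod ?b)^2)"
        unfolding l_def using n2 by (simp add: power2_eq_square mult.commute mult.left_commute)
      show ?thesis unfolding e1 e2 e3 by simp
    qed
    finally show ?thesis .
  qed
  from quad_disc[OF this _ c0] have "(cmod ?b)^2 \<le> ?a * ?c" by simp
  thus ?thesis .
qed


lemma psd_id: "psd_mat (mat 1 :: complex^'d^'d)"
proof -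
  have "hermitian_mat (mat 1 :: complex^'d^'d)" unfolding hermitian_mat_def by (simp add: mat_def)
  moreover have "0 \<le> Re (cinner_vec v ((mat 1 :: complex^'d^'d) *v v))" for v :: "complex^'d"
    unfolding matrix_vector_mul_lid norm_sq_cinner[symmetric] by simp
  ultimately show ?thesis unfolding psd_mat_def by blast
qed

lemma cs_plain: "cmod (cinner_vec u w) \<le> norm u * norm w"
proof -
  have "(cmod (cinner_vec u w))^2 \<le> (norm u * norm w)^2"
    using psd_cs[OF psd_id, of u w] by (simp add: norm_sq_cinner power_mult_distrib)
  thus ?thesis by (rule power2_le_imp_le) simp
qed

lemma psd_zero: "psd_mat (0 :: complex^'d^'d)"
  unfolding psd_mat_def hermitian_mat_def cinner_vec_def by simp

lemma psd_add: assumes "psd_mat A" "psd_mat B" shows "psd_mat (A + B :: complex^'d^'d)"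
proof -
  have "hermitian_mat (A+B)" using assms unfolding psd_mat_def hermitian_mat_def
    by (metis complex_cnj_add vector_add_component)
  moreover have "0 \<le> Re (cinner_vec v ((A+B) *v v))" for v
    using assms unfolding psd_mat_def
    by (simp add: matrix_vector_mult_add_rdistrib cinner_add_right add_nonneg_nonneg)
  ultimately show ?thesis unfolding psd_mat_def by blast
qed

lemma psd_sum: "finite S \<Longrightarrow> (\<And>p. p \<in> S \<Longrightarrow> psd_mat (g p)) \<Longrightarrow> psd_mat (sum g S :: complex^'d^'d)"
  by (induction S rule: finite_induct) (auto intro: psd_add psd_zero)

lemma opnorm_le1:
  assumes A: "psd_mat (A::complex^'d^'d)" and B: "psd_mat B" and AB: "A + B = mat 1"
  shows "op_norm A \<le> 1"
  unfolding op_norm_def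
proof (rule onorm_bound)
  fix v :: "complex^'d"
  define w where "w = A *v v"
  have fw: "Re (cinner_vec w (A *v w)) \<le> (norm w)^2"
  proof -
    have "Re (cinner_vec w (A *v w)) + Re (cinner_vec w (B *v w)) = Re (cinner_vec w ((A+B) *v w))"
      by (simp add: matrix_vector_mult_add_rdistrib cinner_add_right)
    also have "\<dots> = (norm w)^2" using AB by (simp add: norm_sq_cinner)
    finally show ?thesis using B unfolding psd_mat_def by (metis le_add_same_cancel1)
  qed
  have fv: "Re (cinner_vec v (A *v v)) \<le> (norm v)^2"
  proof -
    have "Re (cinner_vec v (A *v v)) + Re (cinner_vec v (B *v v)) = Re (cinner_vec v ((A+B) *v v))"
      by (simp add: matrix_vector_mult_add_rdistrib cinner_add_right)
    also have "\<dots> = (norm v)^2" using AB by (simp add: norm_sq_cinner)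
    finally show ?thesis using B unfolding psd_mat_def by (metis le_add_same_cancel1)
  qed
  have f0: "0 \<le> Re (cinner_vec w (A *v w))" using A unfolding psd_mat_def by blast
  have "(cmod (cinner_vec w (A *v v)))^2 \<le> (norm w)^2 * (norm v)^2"
  proof -
    have "0 \<le> Re (cinner_vec v (A *v v))" using A unfolding psd_mat_def by blast
    hence "Re (cinner_vec w (A *v w)) * Re (cinner_vec v (A *v v)) \<le> (norm w)^2 * (norm v)^2"
      by (intro mult_mono[OF fw fv] zero_le_power2)
    with psd_cs[OF A, of w v] show ?thesis by (rule order_trans)
  qed
  hence "(cmod (cinner_vec w (A *v v)))^2 \<le> (norm w * norm v)^2" by (simp add: power_mult_distrib)
  hence c1: "cmod (cinner_vec w (A *v v)) \<le> norm w * norm v"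
    by (rule power2_le_imp_le) simp
  have "(norm w)^2 = Re (cinner_vec w (A *v v))" by (simp add: norm_sq_cinner w_def)
  also have "\<dots> \<le> cmod (cinner_vec w (A *v v))" by (rule complex_Re_le_cmod)
  finally have "norm w * norm w \<le> norm w * norm v" using c1 by (simp add: power2_eq_square)
  hence "norm w \<le> norm v"
    by (metis mult_le_cancel_left norm_ge_zero order_less_le not_le mult_zero_left)
  thus "norm (A *v v) \<le> 1 * norm v" by (simp add: w_def)
qed simp


definition mtr :: "complex^'d^'d \<Rightarrow> complex" where "mtr A = (\<Sum>i\<in>UNIV. A$i$i)"

lemma axis_form0: "cinner_vec (axis i 1) x = (\<Sum>j\<in>UNIV. if j = i then x $ j else 0)"
  unfolding cinner_vec_def by (rule sum.cong[OF refl]) (simp add: axis_def)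

lemma axis_form: "cinner_vec (axis i 1) (A *v w) = (A *v w) $ i"
  unfolding axis_form0 by simp

lemma axis_diag: "(A *v axis i 1) $ i = (A::complex^'d^'d) $ i $ i"
  unfolding matrix_vector_mult_def axis_def by (simp add: if_distrib cong: if_cong)

lemma opnorm_trace:
  assumes A: "psd_mat (A::complex^'d^'d)"
  shows "op_norm A \<le> Re (mtr A)"
  unfolding op_norm_def
proof (rule onorm_bound)
  have d0: "0 \<le> Re (A$i$i)" for i
    using A unfolding psd_mat_def by (metis axis_form axis_diag)
  thus T0: "0 \<le> Re (mtr A)" unfolding mtr_def Re_sum by (simp add: sum_nonneg)
  fix v :: "complex^'d"
  define w where "w = A *v v"
  define R where "R = Re (cinner_vec v (A *v v))"
  have ci: "(cmod (w$i))^2 \<le> Re (A$i$i) * R" for i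
    using psd_cs[OF A, of "axis i 1" v] unfolding axis_form axis_diag w_def R_def .
  have "(norm w)^2 = (\<Sum>i\<in>UNIV. (cmod (w$i))^2)"
    unfolding norm_vec_def L2_set_def by (simp add: sum_nonneg)
  also have "\<dots> \<le> (\<Sum>i\<in>UNIV. Re (A$i$i) * R)" by (rule sum_mono) (rule ci)
  also have "\<dots> = Re (mtr A) * R" unfolding mtr_def Re_sum by (simp add: sum_distrib_right)
  also have "R \<le> norm v * norm w"
    unfolding R_def w_def by (metis complex_Re_le_cmod cs_plain order_trans)
  hence "Re (mtr A) * R \<le> Re (mtr A) * (norm v * norm w)" using T0 by (rule mult_left_mono)
  finally have "norm w * norm w \<le> norm w * (Re (mtr A) * norm v)"
    by (simp add: power2_eq_square algebra_simps)
  hence "norm w \<le> Re (mtr A) * norm v"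
    using T0 by (metis mult_le_cancel_left norm_ge_zero order_less_le not_le mult_zero_left mult_nonneg_nonneg)
  thus "norm (A *v v) \<le> Re (mtr A) * norm v" by (simp add: w_def)
qed


lemma opnorm_add: "op_norm (A + B :: complex^'d^'d) \<le> op_norm A + op_norm B"
  unfolding op_norm_def matrix_vector_mult_add_rdistrib
  by (rule onorm_triangle) simp_all

lemma mtr_sum: "finite S \<Longrightarrow> mtr (sum f S) = (\<Sum>p\<in>S. mtr (f p :: complex^'d^'d))"
  unfolding mtr_def by (simp add: sum_component sum.swap[of _ UNIV])

lemma mtr_id: "mtr (mat 1 :: complex^'d^'d) = of_nat CARD('d)"
  unfolding mtr_def by (simp add: mat_def)

lemma pair_bound:
  fixes G :: "nat \<Rightarrow> nat \<Rightarrow> complex^'d^'d"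
  assumes psd: "\<forall>x<n. \<forall>y<m. psd_mat (G x y)" and tot: "(\<Sum>x<n. \<Sum>y<m. G x y) = mat 1"
    and x: "x < n" and y: "y < m"
  shows "op_norm ((\<Sum>y'<m. G x y') + (\<Sum>x'<n. G x' y)) \<le> 1 + Re (mtr (G x y))"
proof -
  define g where "g = (\<lambda>(a,b). G a b)"
  define T where "T = {..<n} \<times> {..<m}"
  define P where "P = {x} \<times> {..<m}"
  define Q where "Q = {..<n} \<times> {y}"
  have fT: "finite T" unfolding T_def by simp
  have e1: "(\<Sum>y'<m. G x y') = sum g P"
    unfolding P_def g_def using sum.cartesian_product[where g="\<lambda>a b. G a b" and A="{x}" and B="{..<m}"] by simp
  have e2: "(\<Sum>x'<n. G x' y) = sum g Q"
    unfolding Q_def g_def using sum.cartesian_product[where g="\<lambda>a b. G a b" and A="{..<n}" and B="{y}"] by simp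
  have PQ: "P \<inter> Q = {(x,y)}" unfolding P_def Q_def using x y by auto
  have un: "sum g (P \<union> Q) + sum g (P \<inter> Q) = sum g P + sum g Q"
    by (rule sum.union_inter) (simp_all add: P_def Q_def)
  hence dec: "(\<Sum>y'<m. G x y') + (\<Sum>x'<n. G x' y) = sum g (P \<union> Q) + G x y"
    unfolding e1 e2 PQ by (simp add: g_def)
  have sub: "P \<union> Q \<subseteq> T" unfolding P_def Q_def T_def using x y by auto
  have gpsd: "\<And>p. p \<in> T \<Longrightarrow> psd_mat (g p)" unfolding T_def g_def using psd by auto
  have "sum g T = mat 1"
    unfolding T_def g_def using tot sum.cartesian_product[where g="\<lambda>a b. G a b" and A="{..<n}" and B="{..<m}"] by simp
  moreover have "sum g T = sum g (P \<union> Q) + sum g (T - (P \<union> Q))"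
    using sum.subset_diff[OF sub fT, of g] by (simp add: add.commute)
  ultimately have "sum g (P \<union> Q) + sum g (T - (P \<union> Q)) = mat 1" by simp
  moreover have "psd_mat (sum g (P \<union> Q))"
    by (rule psd_sum) (use sub fT gpsd in \<open>auto intro: finite_subset\<close>)
  moreover have "psd_mat (sum g (T - (P \<union> Q)))"
    by (rule psd_sum) (use fT gpsd in auto)
  ultimately have n1: "op_norm (sum g (P \<union> Q)) \<le> 1" by (intro opnorm_le1)
  have n2: "op_norm (G x y) \<le> Re (mtr (G x y))" using psd x y by (simp add: opnorm_trace)
  show ?thesis unfolding dec using opnorm_add[of "sum g (P \<union> Q)" "G x y"] n1 n2 by linarith
qed

theorem proposition3:
  fixes M1 M2 :: "nat \<Rightarrow> complex^'d^'d" and n m :: nat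
  assumes "n \<ge> 1" and "m \<ge> 1"
    and "povm n M1" and "povm m M2"
    and "Pbar n m M1 M2 > (1/2) * (1 + real CARD('d) / (real n * real m))"
  shows "\<not> compatible n m M1 M2"
proof
  assume "compatible n m M1 M2"
  then obtain G :: "nat \<Rightarrow> nat \<Rightarrow> complex^'d^'d" where
    psd: "\<forall>x<n. \<forall>y<m. psd_mat (G x y)" and tot: "(\<Sum>x<n. \<Sum>y<m. G x y) = mat 1"
    and m1: "\<forall>x<n. (\<Sum>y<m. G x y) = M1 x" and m2: "\<forall>y<m. (\<Sum>x<n. G x y) = M2 y"
    unfolding compatible_def by blast
  have "(\<Sum>x<n. \<Sum>y<m. op_norm (M1 x + M2 y)) \<le> (\<Sum>x<n. \<Sum>y<m. 1 + Re (mtr (G x y)))"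
  proof (intro sum_mono)
    fix x y assume x: "x \<in> {..<n}" and y: "y \<in> {..<m}"
    show "op_norm (M1 x + M2 y) \<le> 1 + Re (mtr (G x y))"
      using pair_bound[OF psd tot, of x y] x y m1 m2 by simp
  qed
  also have "\<dots> = real n * real m + Re (mtr (\<Sum>x<n. \<Sum>y<m. G x y))"
    by (simp add: sum.distrib mtr_sum Re_sum)
  also have "\<dots> = real n * real m + real CARD('d)" unfolding tot mtr_id by simp
  finally have S: "(\<Sum>x<n. \<Sum>y<m. op_norm (M1 x + M2 y)) \<le> real n * real m + real CARD('d)" .
  have pos: "0 < 2 * real n * real m" using assms(1,2) by simp
  have "Pbar n m M1 M2 \<le> (1 / (2 * real n * real m)) * (real n * real m + real CARD('d))"
    unfolding Pbar_def by (rule mult_left_mono[OF S]) (use pos in simp)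
  also have "\<dots> = (1/2) * (1 + real CARD('d) / (real n * real m))"
  proof -
    have "real n \<noteq> 0" "real m \<noteq> 0" using assms(1,2) by simp_all
    thus ?thesis by (simp add: field_simps)
  qed
  finally show False using assms(5) by simp
qed

end
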